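(* Let $X$ be a complete hyperbolic surface of finite area and $p$ a cusp. There is a constant $C>0$ such that for every integer $n\ge1$ and every $T>0$, $$A_n^p(T)\le \frac{Ce^T}{n^2}.$$
   Context: $N_p(1)$ is the embedded horoball neighborhood of $p$ whose boundary horocycle has length $1$. Lifting to the upper half-plane with $p$ at $\infty$, $N_p(1)$ lifts to $\{\mathrm{Im}\,z\ge h\}$ and the stabilizer of $\infty$ is generated by $z\mapsto z+1$ (suitably normalized). An $n$-excursion in $N_p(1)$ is a geodesic arc contained in $N_p(1)$ with endpoints on $\partial N_p(1)$ whose lifted endpoints $z_1,z_2$ satisfy $n\le|\mathrm{Re}\,z_1-\mathrm{Re}\,z_2|<n+1$. $A_n^p(T)$ is the total number of $n$-excursions in $N_p(1)$ occurring as subarcs of closed geodesics of length $\le T$ (i.e. the number of pairs $(\gamma,\eta)$ with $\gamma$ a closed geodesic of length $\le T$ and $\eta$ an $n$-excursion of $\gamma$ in $N_p(1)$). *)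

theory Defs
  imports "HOL-Analysis.Analysis"
begin

text \<open>Model: a complete orientable hyperbolic surface of finite area is the quotient
  of the upper half plane by a Fuchsian group, represented as a set of matrices of
  SL(2,R) (acting by Moebius transformations, possibly containing -I).\<close>

type_synonym mat2 = "real^2^2"


definition mk2 :: "real \<Rightarrow> real \<Rightarrow> real \<Rightarrow> real \<Rightarrow> mat2" where
  "mk2 a b c d = (\<chi> i j. if i = 1 then (if j = 1 then a else b) else (if j = 1 then c else d))"

definition tr2 :: "mat2 \<Rightarrow> real" where
  "tr2 g = g$1$1 + g$2$2"

fun mpow :: "mat2 \<Rightarrow> nat \<Rightarrow> mat2" where
  "mpow g 0 = mat 1"
| "mpow g (Suc k) = g ** mpow g k"

definition mob :: "mat2 \<Rightarrow> complex \<Rightarrow> complex" where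
  "mob g z = (of_real (g$1$1) * z + of_real (g$1$2)) / (of_real (g$2$1) * z + of_real (g$2$2))"

definition UHP :: "complex set" where
  "UHP = {z. Im z > 0}"

text \<open>Fuchsian group giving a complete hyperbolic surface of finite area:
  subgroup of SL(2,R), discrete, torsion free (in PSL(2,R)), with a measurable
  set of finite hyperbolic area whose translates cover the upper half plane.\<close>
definition fuchsian_finite_area_surface_group :: "mat2 set \<Rightarrow> bool" where
  "fuchsian_finite_area_surface_group \<Gamma> \<longleftrightarrow>
     (\<forall>g\<in>\<Gamma>. det g = 1) \<and> mat 1 \<in> \<Gamma> \<and>
     (\<forall>g\<in>\<Gamma>. \<forall>h\<in>\<Gamma>. g ** h \<in> \<Gamma>) \<and>
     (\<forall>g\<in>\<Gamma>. \<exists>h\<in>\<Gamma>. g ** h = mat 1) \<and>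
     (\<forall>R. finite (\<Gamma> \<inter> cball 0 R)) \<and>
     (\<forall>g\<in>\<Gamma>. (\<exists>k>0. mpow g k = mat 1 \<or> mpow g k = - mat 1) \<longrightarrow> g = mat 1 \<or> g = - mat 1) \<and>
     (\<exists>F. F \<in> sets lebesgue \<and> F \<subseteq> UHP \<and>
          (\<lambda>z. 1 / (Im z)^2) integrable_on F \<and>
          (\<forall>z\<in>UHP. \<exists>g\<in>\<Gamma>. mob g z \<in> F))"

text \<open>Cusp p normalised at infinity: the stabiliser of infinity (lower-left entry 0)
  is generated, modulo +-I, by the translation z \<mapsto> z + 1.\<close>
definition transl :: "int \<Rightarrow> mat2" where
  "transl k = mk2 1 (of_int k) 0 1"

definition cusp_at_infinity :: "mat2 set \<Rightarrow> bool" where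
  "cusp_at_infinity \<Gamma> \<longleftrightarrow> transl 1 \<in> \<Gamma> \<and>
     (\<forall>g\<in>\<Gamma>. g$2$1 = 0 \<longrightarrow> (\<exists>k::int. g = transl k \<or> g = - transl k))"

definition hyperbolic_el :: "mat2 \<Rightarrow> bool" where
  "hyperbolic_el g \<longleftrightarrow> \<bar>tr2 g\<bar> > 2"

definition primitive_in :: "mat2 set \<Rightarrow> mat2 \<Rightarrow> bool" where
  "primitive_in \<Gamma> g \<longleftrightarrow> \<not> (\<exists>h\<in>\<Gamma>. \<exists>k\<ge>2. g = mpow h k \<or> g = - mpow h k)"

text \<open>Translation length of a hyperbolic element = length of the closed geodesic.\<close>
definition transl_length :: "mat2 \<Rightarrow> real" where
  "transl_length g = 2 * arcosh (\<bar>tr2 g\<bar> / 2)"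

text \<open>The axis of a hyperbolic element with nonzero lower-left entry: the geodesic
  of the upper half plane whose endpoints are the two real fixed points of g,
  i.e. the semicircle with the following centre and radius.\<close>
definition axis_centre :: "mat2 \<Rightarrow> real" where
  "axis_centre g = (g$1$1 - g$2$2) / (2 * g$2$1)"

definition axis_radius :: "mat2 \<Rightarrow> real" where
  "axis_radius g = sqrt ((tr2 g)^2 - 4) / (2 * \<bar>g$2$1\<bar>)"

definition axis :: "mat2 \<Rightarrow> complex set" where
  "axis g = {z\<in>UHP. cmod (z - of_real (axis_centre g)) = axis_radius g}"

text \<open>Endpoints of the lifted arc in the horoball {Im z \<ge> 1} (the lift of N_p(1),
  whose boundary horocycle has length 1 for the translation z \<mapsto> z+1), and the
  horizontal width |Re z1 - Re z2| of the excursion.\<close>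
definition excursion_endpoints :: "mat2 \<Rightarrow> complex set" where
  "excursion_endpoints g = {z\<in>axis g. Im z = 1}"

definition n_excursion_lift :: "nat \<Rightarrow> mat2 \<Rightarrow> bool" where
  "n_excursion_lift n g \<longleftrightarrow> g$2$1 \<noteq> 0 \<and>
     (\<exists>z1 z2. excursion_endpoints g = {z1, z2} \<and> z1 \<noteq> z2 \<and>
        real n \<le> \<bar>Re z1 - Re z2\<bar> \<and> \<bar>Re z1 - Re z2\<bar> < real n + 1)"

text \<open>The oriented
  primitive closed geodesics are the conjugacy classes of primitive hyperbolic
  elements (sign fixed by tr > 2); the lifts of a closed geodesic are the axes of
  the elements of its conjugacy class; the excursions of it in N_p(1) correspond to
  lifts meeting {Im z \<ge> 1} modulo the stabiliser <z \<mapsto> z+1>, normalised by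
  requiring the midpoint of the lifted arc to have real part in [0,1).\<close>
definition excursion_lifts :: "mat2 set \<Rightarrow> nat \<Rightarrow> real \<Rightarrow> mat2 set" where
  "excursion_lifts \<Gamma> n T = {g\<in>\<Gamma>. primitive_in \<Gamma> g \<and> tr2 g > 2 \<and>
      transl_length g \<le> T \<and> n_excursion_lift n g \<and>
      0 \<le> axis_centre g \<and> axis_centre g < 1}"

definition A_count :: "mat2 set \<Rightarrow> nat \<Rightarrow> real \<Rightarrow> nat" where
  "A_count \<Gamma> n T = card (excursion_lifts \<Gamma> n T)"

end

theory Submission
  imports Defs
begin



lemma two_ne: "(2::2) \<noteq> 1" by simp

lemma mk2_nth[simp]:
  "mk2 a b c d $1$1 = a" "mk2 a b c d $1$2 = b" "mk2 a b c d $2$1 = c" "mk2 a b c d $2$2 = d"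
  by (simp_all add: mk2_def)

lemma mat2_eq: "(g::mat2) = mk2 (g$1$1) (g$1$2) (g$2$1) (g$2$2)"
  unfolding mk2_def by (simp add: vec_eq_iff forall_2)

lemma mat2_ext: "(g::mat2) = h \<longleftrightarrow> g$1$1 = h$1$1 \<and> g$1$2 = h$1$2 \<and> g$2$1 = h$2$1 \<and> g$2$2 = h$2$2"
  by (metis mat2_eq)

lemma mult_nth[simp]:
  fixes g h :: mat2
  shows "(g ** h)$1$1 = g$1$1 * h$1$1 + g$1$2 * h$2$1"
    "(g ** h)$1$2 = g$1$1 * h$1$2 + g$1$2 * h$2$2"
    "(g ** h)$2$1 = g$2$1 * h$1$1 + g$2$2 * h$2$1"
    "(g ** h)$2$2 = g$2$1 * h$1$2 + g$2$2 * h$2$2"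
  by (simp_all add: matrix_matrix_mult_def sum_2)

lemma mat1_nth[simp]: "(mat 1::mat2)$1$1 = 1" "(mat 1::mat2)$1$2 = 0" "(mat 1::mat2)$2$1 = 0" "(mat 1::mat2)$2$2 = 1"
  by (simp_all add: mat_def)

lemma neg_nth[simp]: fixes g :: mat2 shows "(-g)$i$j = - (g$i$j)" by simp

lemma det2: "det (g::mat2) = g$1$1 * g$2$2 - g$1$2 * g$2$1"
  by (simp add: det_2)

lemma transl_nth[simp]: "transl k $1$1 = 1" "transl k $1$2 = of_int k" "transl k $2$1 = 0" "transl k $2$2 = 1"
  by (simp_all add: transl_def)

definition adj :: "mat2 \<Rightarrow> mat2" where "adj g = mk2 (g$2$2) (-g$1$2) (-g$2$1) (g$1$1)"

lemma adj_nth[simp]: "adj g $1$1 = g$2$2" "adj g $1$2 = -g$1$2" "adj g $2$1 = -g$2$1" "adj g $2$2 = g$1$1"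
  by (simp_all add: adj_def)

lemma adj_inv: "det g = 1 \<Longrightarrow> g ** adj g = mat 1" "det g = 1 \<Longrightarrow> adj g ** g = mat 1"
  by (auto simp: mat2_ext det2 algebra_simps)

lemma norm_mat2: "norm (g::mat2) \<le> \<bar>g$1$1\<bar> + \<bar>g$1$2\<bar> + \<bar>g$2$1\<bar> + \<bar>g$2$2\<bar>"
proof -
  have "norm g \<le> norm (g$1) + norm (g$2)" unfolding norm_vec_def by (rule order_trans[OF L2_set_le_sum]) (auto simp: sum_2)
  also have "norm (g$1) \<le> \<bar>g$1$1\<bar> + \<bar>g$1$2\<bar>" using norm_le_l1_cart[of "g$1"] by (simp add: sum_2)
  also have "norm (g$2) \<le> \<bar>g$2$1\<bar> + \<bar>g$2$2\<bar>" using norm_le_l1_cart[of "g$2"] by (simp add: sum_2)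
  finally show ?thesis by simp
qed




locale FG =
  fixes \<Gamma> :: "mat2 set"
  assumes F: "fuchsian_finite_area_surface_group \<Gamma>"
    and Cu: "cusp_at_infinity \<Gamma>"
begin

lemma G_det: "g \<in> \<Gamma> \<Longrightarrow> det g = 1" using F unfolding fuchsian_finite_area_surface_group_def by blast
lemma G_mult: "g \<in> \<Gamma> \<Longrightarrow> h \<in> \<Gamma> \<Longrightarrow> g ** h \<in> \<Gamma>" using F unfolding fuchsian_finite_area_surface_group_def by blast
lemma G_one: "mat 1 \<in> \<Gamma>" using F unfolding fuchsian_finite_area_surface_group_def by blast
lemma G_fin: "finite (\<Gamma> \<inter> cball 0 R)" using F unfolding fuchsian_finite_area_surface_group_def by blast
lemma G_adj: assumes "g \<in> \<Gamma>" shows "adj g \<in> \<Gamma>"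
proof -
  obtain h where h: "h \<in> \<Gamma>" "g ** h = mat 1" using F assms unfolding fuchsian_finite_area_surface_group_def by blast
  have "adj g = adj g ** (g ** h)" using h by simp
  also have "\<dots> = (adj g ** g) ** h" by (simp add: matrix_mul_assoc)
  also have "\<dots> = h" using adj_inv(2)[OF G_det[OF assms]] by simp
  finally show ?thesis using h by simp
qed

lemma transl_mult: "transl j ** transl k = transl (j + k)"
  by (simp add: mat2_ext)

lemma transl_in: "transl k \<in> \<Gamma>"
proof -
  have t1: "transl 1 \<in> \<Gamma>" using Cu unfolding cusp_at_infinity_def by blast
  have tm: "transl (-1) \<in> \<Gamma>"
  proof -
    have "adj (transl 1) = transl (-1)" by (simp add: mat2_ext)
    thus ?thesis using G_adj[OF t1] by simp
  qed
  have t0: "transl 0 \<in> \<Gamma>" using G_one by (metis mat2_ext mat1_nth transl_nth of_int_0 of_int_1)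
  show ?thesis
  proof (induct k rule: int_induct[where k=0])
    case base then show ?case using t0 by simp
  next
    case (step1 i) then show ?case using G_mult[OF t1 step1(2)] transl_mult[of 1 i] by (simp add: add.commute)
  next
    case (step2 i) then show ?case using G_mult[OF tm step2(2)] transl_mult[of "-1" i] by simp
  qed
qed

lemma stab: "g \<in> \<Gamma> \<Longrightarrow> g$2$1 = 0 \<Longrightarrow> \<exists>k. g = transl k \<or> g = - transl k"
  using Cu unfolding cusp_at_infinity_def by blast

lemma conj_step:
  assumes "det g = 1"
  shows "(g ** transl 1 ** adj g)$1$1 = 1 - g$1$1 * g$2$1"
    "(g ** transl 1 ** adj g)$1$2 = (g$1$1)^2"
    "(g ** transl 1 ** adj g)$2$1 = - ((g$2$1)^2)"
    "(g ** transl 1 ** adj g)$2$2 = 1 + g$1$1 * g$2$1"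
  using assms by (auto simp: det2 algebra_simps power2_eq_square)

lemma shimizu:
  assumes h: "h \<in> \<Gamma>" "h$2$1 \<noteq> 0"
  shows "1 \<le> \<bar>h$2$1\<bar>"
proof (rule ccontr)
  assume nt: "\<not> 1 \<le> \<bar>h$2$1\<bar>"
  define q where "q = \<bar>h$2$1\<bar>"
  have q: "0 < q" "q < 1" using h nt unfolding q_def by auto
  define H where "H = rec_nat h (\<lambda>_ g. g ** transl 1 ** adj g)"
  have H0: "H 0 = h" and HS: "\<And>k. H (Suc k) = H k ** transl 1 ** adj (H k)" by (simp_all add: H_def)
  have HG: "H k \<in> \<Gamma>" for k
    by (induct k) (simp_all add: H0 HS h G_mult G_adj transl_in)
  have Hdet: "det (H k) = 1" for k using G_det[OF HG] .
  define M where "M = max \<bar>h$1$1\<bar> (1/(1-q))"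
  have M1: "1 + M * q \<le> M"
  proof -
    have "1/(1-q) \<le> M" unfolding M_def by simp
    hence "1 \<le> M * (1 - q)" using q by (simp add: field_simps)
    thus ?thesis by (simp add: algebra_simps)
  qed
  have M0: "0 \<le> M" unfolding M_def by simp
  have inv: "0 < \<bar>H k$2$1\<bar> \<and> \<bar>H k$2$1\<bar> \<le> q \<and> \<bar>H k$1$1\<bar> \<le> M \<and> \<bar>H k$1$2\<bar> \<le> max \<bar>h$1$2\<bar> (M^2)
      \<and> \<bar>H k$2$2\<bar> \<le> max \<bar>h$2$2\<bar> M" for k
  proof (induct k)
    case 0 then show ?case using h q by (simp add: H0 q_def M_def)
  next
    case (Suc k)
    let ?a = "H k$1$1" and ?c = "H k$2$1"
    have e: "H (Suc k)$1$1 = 1 - ?a * ?c" "H (Suc k)$1$2 = ?a^2" "H (Suc k)$2$1 = - (?c^2)"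
      "H (Suc k)$2$2 = 1 + ?a * ?c" using conj_step[OF Hdet[of k]] by (simp_all add: HS)
    have cpos: "0 < \<bar>?c\<bar>" and cq: "\<bar>?c\<bar> \<le> q" and aM: "\<bar>?a\<bar> \<le> M" using Suc by auto
    have ac: "\<bar>?a * ?c\<bar> \<le> M * q" using aM cq M0 unfolding abs_mult by (intro mult_mono) auto
    have c2: "?c^2 \<le> \<bar>?c\<bar>"
    proof -
      have "?c^2 = \<bar>?c\<bar> * \<bar>?c\<bar>" by (simp add: power2_eq_square abs_mult_self_eq)
      also have "\<dots> \<le> \<bar>?c\<bar> * 1" using cq q by (intro mult_left_mono) auto
      finally show ?thesis by simp
    qed
    have c2p: "0 < ?c^2" using cpos by simp
    have a2: "?a^2 \<le> M^2" using power_mono[OF aM abs_ge_zero, of 2] by simp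
    have t1: "0 < \<bar>H (Suc k)$2$1\<bar>" using e(3) c2p by simp
    have t2: "\<bar>H (Suc k)$2$1\<bar> \<le> q" using e(3) c2 cq by simp
    have t3: "\<bar>H (Suc k)$1$1\<bar> \<le> M" using e(1) ac M1 by (simp add: abs_le_iff)
    have t4: "\<bar>H (Suc k)$1$2\<bar> \<le> max \<bar>h$1$2\<bar> (M^2)" using e(2) a2 by simp
    have t5: "\<bar>H (Suc k)$2$2\<bar> \<le> max \<bar>h$2$2\<bar> M" 
    proof -
      have "\<bar>1 + ?a * ?c\<bar> \<le> M" using ac M1 abs_triangle_ineq[of 1 "?a * ?c"] by simp
      thus ?thesis using e(4) by (simp add: le_max_iff_disj)
    qed
    show ?case using t1 t2 t3 t4 t5 by blast
  qed
  have dec: "- \<bar>H k$2$1\<bar> < - \<bar>H (Suc k)$2$1\<bar>" for k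
  proof -
    have "H (Suc k)$2$1 = - ((H k$2$1)^2)" using conj_step[OF Hdet[of k]] by (simp add: HS)
    moreover have "(H k$2$1)^2 < \<bar>H k$2$1\<bar>"
    proof -
      have "(H k$2$1)^2 = \<bar>H k$2$1\<bar> * \<bar>H k$2$1\<bar>" by (simp add: power2_eq_square abs_mult_self_eq)
      also have "\<dots> < \<bar>H k$2$1\<bar> * 1" using inv[of k] q by (intro mult_strict_left_mono) auto
      finally show ?thesis by simp
    qed
    ultimately show ?thesis by simp
  qed
  have "inj H"
  proof (rule injI)
    fix k l assume "H k = H l"
    show "k = l"
    proof (rule ccontr)
      assume "k \<noteq> l"
      have lt: "\<And>i j. i < j \<Longrightarrow> - \<bar>H i$2$1\<bar> < - \<bar>H j$2$1\<bar>"
        by (rule lift_Suc_mono_less[of "\<lambda>k. - \<bar>H k$2$1\<bar>"]) (rule dec)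
      from \<open>k \<noteq> l\<close> show False
      proof (rule linorder_neqE)
        assume "k < l" thus False using lt[of k l] \<open>H k = H l\<close> by simp
      next
        assume "l < k" thus False using lt[of l k] \<open>H k = H l\<close> by simp
      qed
    qed
  qed
  hence inf: "infinite (range H)" by (rule range_inj_infinite)
  define R where "R = M + max \<bar>h$1$2\<bar> (M^2) + q + max \<bar>h$2$2\<bar> M"
  have "range H \<subseteq> \<Gamma> \<inter> cball 0 R"
  proof
    fix x assume "x \<in> range H"
    then obtain k where k: "x = H k" by blast
    have "norm x \<le> R" unfolding k R_def using norm_mat2[of "H k"] inv[of k] by linarith
    thus "x \<in> \<Gamma> \<inter> cball 0 R" using HG k by (simp add: dist_norm)
  qed
  thus False using inf G_fin finite_subset by blast
qed

end



lemma cosh_le_exp: "0 \<le> (x::real) \<Longrightarrow> cosh x \<le> exp x"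
proof -
  assume x: "0 \<le> x"
  have "exp (-x) \<le> exp x" using x by simp
  thus ?thesis by (simp add: cosh_def)
qed

lemma trace_bound:
  assumes t: "2 < t" and L: "2 * arcosh (t/2) \<le> (T::real)"
  shows "t \<le> 2 * exp (T/2)"
proof -
  have t1: "1 \<le> t/2" using t by simp
  have a0: "0 \<le> arcosh (t/2)" using t1 by simp
  have "arcosh (t/2) \<le> T/2" using L by simp
  hence "cosh (arcosh (t/2)) \<le> cosh (T/2)" using a0 by (subst cosh_real_nonneg_le_iff) auto
  hence "t/2 \<le> cosh (T/2)" using t1 by simp
  also have "\<dots> \<le> exp (T/2)" using a0 \<open>arcosh (t/2) \<le> T/2\<close> by (intro cosh_le_exp) linarith
  finally show ?thesis by simp
qed

lemma width_trace:
  fixes g :: mat2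
  assumes "n_excursion_lift n g" and t: "2 < tr2 g" and c1: "1 \<le> \<bar>g$2$1\<bar>"
  shows "real n * \<bar>g$2$1\<bar> \<le> tr2 g" "tr2 g \<le> (real n + 4) * \<bar>g$2$1\<bar>"
proof -
  let ?c = "g$2$1" and ?t = "tr2 g" and ?x = "axis_centre g" and ?r = "axis_radius g"
  obtain z1 z2 where z: "excursion_endpoints g = {z1, z2}" "z1 \<noteq> z2"
    "real n \<le> \<bar>Re z1 - Re z2\<bar>" "\<bar>Re z1 - Re z2\<bar> < real n + 1"
    using assms(1) unfolding n_excursion_lift_def by blast
  have r2: "?r^2 = (?t^2 - 4) / (4 * ?c^2)"
  proof -
    have "0 \<le> ?t^2 - 4" using mult_mono[of 2 ?t 2 ?t] t by (simp add: power2_eq_square)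
    hence "(sqrt (?t^2 - 4))^2 = ?t^2 - 4" by simp
    moreover have "(2 * \<bar>?c\<bar>)^2 = 4 * ?c^2" by (simp add: power_mult_distrib)
    ultimately show ?thesis unfolding axis_radius_def power_divide by simp
  qed
  have pt: "(Re z - ?x)^2 + 1 = ?r^2" if "z \<in> excursion_endpoints g" for z
  proof -
    have "cmod (z - of_real ?x) = ?r" "Im z = 1" using that by (simp_all add: excursion_endpoints_def axis_def)
    thus ?thesis using cmod_power2[of "z - of_real ?x"] by simp
  qed
  have e1: "(Re z1 - ?x)^2 + 1 = ?r^2" and e2: "(Re z2 - ?x)^2 + 1 = ?r^2" using pt z(1) by auto
  have "z1 \<in> excursion_endpoints g" "z2 \<in> excursion_endpoints g" using z(1) by auto
  hence im: "Im z1 = Im z2" unfolding excursion_endpoints_def by simp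
  have "Re z1 \<noteq> Re z2" using z(2) im complex_eqI by blast
  moreover have "(Re z2 - ?x)^2 = (Re z1 - ?x)^2" using e1 e2 by simp
  hence "Re z2 - ?x = Re z1 - ?x \<or> Re z2 - ?x = -(Re z1 - ?x)" by (simp only: power2_eq_iff)
  ultimately have "Re z2 - ?x = - (Re z1 - ?x)" by auto
  hence d: "Re z1 - Re z2 = 2 * (Re z1 - ?x)" by simp
  have "(Re z1 - Re z2)^2 = 4 * (Re z1 - ?x)^2" unfolding d by (simp only: power_mult_distrib) simp
  hence W: "(Re z1 - Re z2)^2 = 4 * (?r^2 - 1)" using e1 by simp
  define W where "W = Re z1 - Re z2"
  have c2: "0 < ?c^2" using c1 by simp
  have "W^2 + 4 = 4 * ?r^2" using W unfolding W_def by simp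
  also have "\<dots> = (?t^2 - 4) / ?c^2" unfolding r2 by (simp add: divide_simps)
  finally have "W^2 + 4 = (?t^2 - 4) / ?c^2" .
  hence "?c^2 * (W^2 + 4) = ?t^2 - 4" using c2 by simp
  hence tt: "?t^2 = ?c^2 * (W^2 + 4) + 4" by simp
  have Wl: "real n ^ 2 \<le> W^2" using power_mono[OF z(3), of 2] unfolding W_def by simp
  have Wu: "W^2 \<le> (real n + 1)^2" using power_mono[OF less_imp_le[OF z(4)], of 2] unfolding W_def by simp
  have sq1: "(real n * \<bar>?c\<bar>)^2 \<le> ?t^2"
  proof -
    have "(real n * \<bar>?c\<bar>)^2 = ?c^2 * real n ^ 2" by (simp add: power_mult_distrib)
    also have "\<dots> \<le> ?c^2 * (W^2 + 4)" using Wl c2 by (intro mult_left_mono) auto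
    finally show ?thesis using tt by simp
  qed
  show "real n * \<bar>?c\<bar> \<le> ?t" by (rule power2_le_imp_le[OF sq1]) (use t in simp)
  have sq2: "?t^2 \<le> ((real n + 4) * \<bar>?c\<bar>)^2"
  proof -
    have cc: "1 \<le> ?c^2" using power_mono[OF c1, of 2] by simp
    have "?c^2 * (W^2 + 4) \<le> ?c^2 * ((real n + 1)^2 + 4)" using Wu c2 by (intro mult_left_mono) simp_all
    hence "?t^2 \<le> ?c^2 * ((real n + 1)^2 + 4) + 4 * ?c^2" unfolding tt using cc by linarith
    also have "\<dots> = ?c^2 * ((real n + 1)^2 + 8)" by (simp add: algebra_simps)
    also have "\<dots> \<le> ?c^2 * (real n + 4)^2" using c2 by (intro mult_left_mono) (simp_all add: power2_eq_square algebra_simps)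
    finally show ?thesis by (simp add: power_mult_distrib mult.commute)
  qed
  show "?t \<le> (real n + 4) * \<bar>?c\<bar>" by (rule power2_le_imp_le[OF sq2]) simp
qed




lemma spacing_card:
  fixes P :: "real set" and \<delta> :: real
  assumes fin: "finite P" and sub: "P \<subseteq> {0..<1}" and d: "0 < \<delta>" "\<delta> \<le> 1"
    and sep: "\<And>p q. p \<in> P \<Longrightarrow> q \<in> P \<Longrightarrow> p \<noteq> q \<Longrightarrow> \<delta> \<le> \<bar>p - q\<bar>"
  shows "real (card P) \<le> 2 / \<delta>"
proof -
  define f where "f p = nat \<lfloor>p / \<delta>\<rfloor>" for p
  have inj: "inj_on f P"
  proof (rule inj_onI)
    fix p q assume pq: "p \<in> P" "q \<in> P" "f p = f q"
    have "0 \<le> p / \<delta>" "0 \<le> q / \<delta>" using pq sub d by auto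
    hence "\<lfloor>p / \<delta>\<rfloor> = \<lfloor>q / \<delta>\<rfloor>" using pq(3) unfolding f_def by (metis nat_eq_iff2 zero_le_floor)
    hence "\<bar>p / \<delta> - q / \<delta>\<bar> < 1" by linarith
    hence "\<bar>p - q\<bar> < \<delta>" using d by (simp add: diff_divide_distrib[symmetric] abs_divide)
    thus "p = q" using sep pq by force
  qed
  have img: "f ` P \<subseteq> {..< nat \<lceil>1 / \<delta>\<rceil>}"
  proof
    fix y assume "y \<in> f ` P"
    then obtain p where p: "p \<in> P" "y = f p" by blast
    have "p / \<delta> < 1 / \<delta>" using p sub d by (auto simp: divide_strict_right_mono)
    hence "\<lfloor>p / \<delta>\<rfloor> < \<lceil>1 / \<delta>\<rceil>" by linarith
    moreover have "0 \<le> \<lfloor>p / \<delta>\<rfloor>" using p sub d by auto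
    ultimately show "y \<in> {..< nat \<lceil>1 / \<delta>\<rceil>}" using p d by (simp add: f_def)
  qed
  have "card P = card (f ` P)" using card_image[OF inj] by simp
  also have "\<dots> \<le> nat \<lceil>1 / \<delta>\<rceil>" using card_mono[OF _ img] by simp
  finally have "real (card P) \<le> real (nat \<lceil>1 / \<delta>\<rceil>)" by simp
  also have "\<dots> \<le> 1 / \<delta> + 1" using d by (simp add: of_nat_nat)
  also have "\<dots> \<le> 2 / \<delta>" using d by (simp add: field_simps)
  finally show ?thesis .
qed

context FG begin

lemma S_props:
  assumes g: "g \<in> excursion_lifts \<Gamma> n T" and n: "1 \<le> n"
  shows "g \<in> \<Gamma>" "g$2$1 \<noteq> 0" "1 \<le> \<bar>g$2$1\<bar>" "2 < g$1$1 + g$2$2" "g$1$1 + g$2$2 \<le> 2 * exp (T/2)"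
    "real n * \<bar>g$2$1\<bar> \<le> g$1$1 + g$2$2" "g$1$1 + g$2$2 \<le> (real n + 4) * \<bar>g$2$1\<bar>"
    "0 \<le> (g$1$1 - g$2$2) / (2 * g$2$1)" "(g$1$1 - g$2$2) / (2 * g$2$1) < 1"
    "det g = 1"
proof -
  have gs: "g \<in> \<Gamma>" "tr2 g > 2" "transl_length g \<le> T" "n_excursion_lift n g"
    "0 \<le> axis_centre g" "axis_centre g < 1" using g unfolding excursion_lifts_def by auto
  show "g \<in> \<Gamma>" using gs by simp
  show c0: "g$2$1 \<noteq> 0" using gs unfolding n_excursion_lift_def by simp
  show c1: "1 \<le> \<bar>g$2$1\<bar>" using shimizu[OF gs(1) c0] .
  show "2 < g$1$1 + g$2$2" using gs by (simp add: tr2_def)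
  show "g$1$1 + g$2$2 \<le> 2 * exp (T/2)" using trace_bound[of "tr2 g" T] gs by (simp add: tr2_def transl_length_def)
  show "real n * \<bar>g$2$1\<bar> \<le> g$1$1 + g$2$2" "g$1$1 + g$2$2 \<le> (real n + 4) * \<bar>g$2$1\<bar>"
    using width_trace[OF gs(4) gs(2) c1] by (simp_all add: tr2_def)
  show "0 \<le> (g$1$1 - g$2$2) / (2 * g$2$1)" "(g$1$1 - g$2$2) / (2 * g$2$1) < 1"
    using gs by (simp_all add: axis_centre_def)
  show "det g = 1" using G_det gs by simp
qed

lemma entry_bounds:
  assumes g: "g \<in> excursion_lifts \<Gamma> n T" and n: "1 \<le> n"
  defines "E \<equiv> exp (T/2)"
  shows "norm g \<le> 8 * E + 9 * E^2 + 1"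
proof -
  note P = S_props[OF g n]
  let ?a = "g$1$1" and ?b = "g$1$2" and ?c = "g$2$1" and ?d = "g$2$2"
  have c: "\<bar>?c\<bar> \<le> 2 * E"
  proof -
    have "\<bar>?c\<bar> \<le> real n * \<bar>?c\<bar>" using n by (simp add: mult_le_cancel_right1)
    thus ?thesis using P(6) P(5) unfolding E_def by linarith
  qed
  define x where "x = (?a - ?d) / (2 * ?c)"
  have ad: "?a - ?d = 2 * ?c * x" using P(2) unfolding x_def by simp
  have "\<bar>?a - ?d\<bar> \<le> 2 * \<bar>?c\<bar>"
  proof -
    have x0: "0 \<le> x" "x < 1" using P(8) P(9) unfolding x_def by simp_all
    have "\<bar>?a - ?d\<bar> = 2 * \<bar>?c\<bar> * x" using x0 by (simp only: ad abs_mult)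
    also have "\<dots> \<le> 2 * \<bar>?c\<bar> * 1" using x0 by (intro mult_left_mono) auto
    finally show ?thesis by simp
  qed
  hence amd: "\<bar>?a - ?d\<bar> \<le> 4 * E" using c by linarith
  have apd: "\<bar>?a + ?d\<bar> \<le> 2 * E" using P(4) P(5) unfolding E_def by simp
  have a: "\<bar>?a\<bar> \<le> 3 * E" using amd apd by linarith
  have d: "\<bar>?d\<bar> \<le> 3 * E" using amd apd by linarith
  have E0: "0 \<le> E" unfolding E_def by simp
  have "?a * ?d - ?b * ?c = 1" using P(10) by (simp add: det2)
  hence "?b * ?c = ?a * ?d - 1" by simp
  hence "\<bar>?b\<bar> * \<bar>?c\<bar> = \<bar>?a * ?d - 1\<bar>" by (simp add: abs_mult[symmetric])
  also have "\<dots> \<le> \<bar>?a * ?d\<bar> + 1" using abs_triangle_ineq4[of "?a * ?d" 1] by simp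
  finally have "\<bar>?b\<bar> * \<bar>?c\<bar> \<le> \<bar>?a\<bar> * \<bar>?d\<bar> + 1" by (simp add: abs_mult)
  moreover have "\<bar>?b\<bar> \<le> \<bar>?b\<bar> * \<bar>?c\<bar>" using P(3) by (simp add: mult_le_cancel_left1)
  moreover have "\<bar>?a\<bar> * \<bar>?d\<bar> \<le> (3 * E) * (3 * E)" using a d by (intro mult_mono) auto
  ultimately have b: "\<bar>?b\<bar> \<le> 9 * E^2 + 1" by (simp add: power2_eq_square)
  show ?thesis using norm_mat2[of g] a b c d by linarith
qed

lemma S_finite:
  assumes n: "1 \<le> n" shows "finite (excursion_lifts \<Gamma> n T)"
proof -
  have "excursion_lifts \<Gamma> n T \<subseteq> \<Gamma> \<inter> cball 0 (8 * exp (T/2) + 9 * (exp (T/2))^2 + 1)"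
    using entry_bounds[OF _ n] S_props(1)[OF _ n] by (auto simp: dist_norm)
  thus ?thesis using G_fin finite_subset by blast
qed

definition phi :: "mat2 \<Rightarrow> real" where
  "phi g = g$1$1 / g$2$1 - of_int \<lfloor>g$1$1 / g$2$1\<rfloor>"

lemma h_entry: fixes g :: mat2 shows
  "(adj g' ** transl (-j) ** g)$2$1 = g'$1$1 * g$2$1 - g'$2$1 * (g$1$1 - of_int j * g$2$1)"
  by (simp add: algebra_simps)

lemma phi_diff:
  assumes "g$2$1 \<noteq> 0" "g'$2$1 \<noteq> 0"
  defines "j \<equiv> \<lfloor>g$1$1 / g$2$1\<rfloor> - \<lfloor>g'$1$1 / g'$2$1\<rfloor>"
  shows "(phi g - phi g') * (g$2$1 * g'$2$1) = - (adj g' ** transl (-j) ** g)$2$1"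
proof -
  have p: "phi g - phi g' = g$1$1 / g$2$1 - g'$1$1 / g'$2$1 - of_int j" unfolding phi_def j_def by simp
  show ?thesis unfolding p by (subst h_entry) (use assms(1,2) in \<open>simp add: field_simps\<close>)
qed

end




context FG begin

lemma phi_sep:
  assumes g: "g \<in> excursion_lifts \<Gamma> n T" and g': "g' \<in> excursion_lifts \<Gamma> n T" and n: "1 \<le> n"
    and ne: "phi g \<noteq> phi g'"
  shows "(real n)^2 / (4 * exp T) \<le> \<bar>phi g - phi g'\<bar>"
proof -
  note P = S_props[OF g n] and P' = S_props[OF g' n]
  define j where "j = \<lfloor>g$1$1 / g$2$1\<rfloor> - \<lfloor>g'$1$1 / g'$2$1\<rfloor>"
  define h where "h = adj g' ** transl (-j) ** g"
  have hG: "h \<in> \<Gamma>" unfolding h_def using P(1) P'(1) by (intro G_mult G_adj transl_in)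
  have pd: "(phi g - phi g') * (g$2$1 * g'$2$1) = - h$2$1"
    unfolding h_def j_def by (rule phi_diff[OF P(2) P'(2)])
  have h0: "h$2$1 \<noteq> 0" using pd ne P(2) P'(2) by auto
  have h1: "1 \<le> \<bar>h$2$1\<bar>" using shimizu[OF hG h0] .
  define X where "X = 2 * exp (T/2) / real n"
  have cX: "\<bar>k$2$1\<bar> \<le> X" if "k \<in> excursion_lifts \<Gamma> n T" for k
  proof -
    note Q = S_props[OF that n]
    have "real n * \<bar>k$2$1\<bar> \<le> 2 * exp (T/2)" using Q(6) Q(5) by linarith
    thus ?thesis unfolding X_def using n by (simp add: field_simps)
  qed
  have cc: "\<bar>g$2$1 * g'$2$1\<bar> \<le> X^2"
    unfolding abs_mult power2_eq_square using cX[OF g] cX[OF g'] by (intro mult_mono) auto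
  have ccp: "0 < \<bar>g$2$1 * g'$2$1\<bar>" using P(2) P'(2) by simp
  have "1 \<le> \<bar>phi g - phi g'\<bar> * \<bar>g$2$1 * g'$2$1\<bar>" using h1 pd by (metis abs_minus_cancel abs_mult)
  also have "\<dots> \<le> \<bar>phi g - phi g'\<bar> * X^2" using cc by (intro mult_left_mono) auto
  finally have f1: "1 \<le> \<bar>phi g - phi g'\<bar> * X^2" .
  have X2: "0 < X^2" using cc ccp by linarith
  have "1 / X^2 \<le> \<bar>phi g - phi g'\<bar>" by (subst pos_divide_le_eq[OF X2]) (rule f1)
  moreover have "1 / X^2 = (real n)^2 / (4 * exp T)"
  proof -
    have "(exp (T/2))^2 = exp T" by (simp add: power2_eq_square exp_add[symmetric])
    thus ?thesis unfolding X_def by (simp add: power_divide power_mult_distrib)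
  qed
  ultimately show ?thesis by simp
qed


end



context FG begin

lemma fiber:
  assumes g: "g \<in> excursion_lifts \<Gamma> n T" and g': "g' \<in> excursion_lifts \<Gamma> n T" and n: "1 \<le> n"
    and eq: "phi g = phi g'" and sg: "sgn (g$2$1) = sgn (g'$2$1)"
  shows "\<exists>j k. j \<in> {-2..2} \<and> k \<in> {-2..2} \<and> g = transl j ** g' ** transl k"
proof -
  note P = S_props[OF g n] and P' = S_props[OF g' n]
  define j where "j = \<lfloor>g$1$1 / g$2$1\<rfloor> - \<lfloor>g'$1$1 / g'$2$1\<rfloor>"
  define h where "h = adj g' ** transl (-j) ** g"
  have hG: "h \<in> \<Gamma>" unfolding h_def using P(1) P'(1) by (intro G_mult G_adj transl_in)
  have pd: "(phi g - phi g') * (g$2$1 * g'$2$1) = - h$2$1"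
    unfolding h_def j_def by (rule phi_diff[OF P(2) P'(2)])
  hence h0: "h$2$1 = 0" using eq by simp
  obtain k where hk: "h = transl k \<or> h = - transl k" using stab[OF hG h0] by blast
  have "g' ** h = (g' ** adj g') ** transl (-j) ** g" unfolding h_def by (simp add: matrix_mul_assoc)
  also have "\<dots> = transl (-j) ** g" using adj_inv(1)[OF P'(10)] by simp
  finally have "transl j ** (g' ** h) = (transl j ** transl (-j)) ** g" by (simp add: matrix_mul_assoc)
  also have "\<dots> = g" by (simp add: transl_mult transl_def mat2_ext)
  finally have gh: "g = transl j ** (g' ** h)" by simp
  have hpos: "h = transl k"
  proof (rule ccontr)
    assume "h \<noteq> transl k"
    hence "h = - transl k" using hk by blast
    hence "g$2$1 = - g'$2$1" using gh by simp
    thus False using sg P(2) by (simp add: sgn_if split: if_splits)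
  qed
  have ent: "g$1$1 = g'$1$1 + of_int j * g'$2$1" "g$2$1 = g'$2$1" "g$2$2 = g'$2$2 + of_int k * g'$2$1"
    using gh hpos by (simp_all add: algebra_simps)
  let ?c = "g'$2$1"
  have c0: "?c \<noteq> 0" using P'(2) .
  have dd: "(g$1$1 - g$2$2) / (2 * g$2$1) - (g'$1$1 - g'$2$2) / (2 * g'$2$1) = of_int (j - k) / 2"
    unfolding ent using c0 by (simp add: field_simps)
  have gen: "\<And>u v w::real. u - v = w \<Longrightarrow> 0 \<le> u \<Longrightarrow> u < 1 \<Longrightarrow> 0 \<le> v \<Longrightarrow> v < 1 \<Longrightarrow> -1 < w \<and> w < 1" by linarith
  have "-1 < of_int (j - k) / (2::real) \<and> of_int (j - k) / (2::real) < 1" by (rule gen[OF dd P(8) P(9) P'(8) P'(9)])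
  hence jk1: "\<bar>of_int (j - k)\<bar> < (2::real)" by (simp add: abs_less_iff)
  have "(g$1$1 + g$2$2) - (g'$1$1 + g'$2$2) = of_int (j + k) * ?c" unfolding ent by (simp add: algebra_simps)
  moreover have "\<bar>(g$1$1 + g$2$2) - (g'$1$1 + g'$2$2)\<bar> \<le> 4 * \<bar>?c\<bar>"
    using P(6) P(7) P'(6) P'(7) ent(2) by (simp add: algebra_simps abs_le_iff)
  ultimately have "\<bar>of_int (j + k)\<bar> * \<bar>?c\<bar> \<le> 4 * \<bar>?c\<bar>" by (simp add: abs_mult)
  hence jk2: "\<bar>of_int (j + k)\<bar> \<le> (4::real)" using c0 by simp
  have "real_of_int \<bar>j - k\<bar> < 2" using jk1 by simp
  hence a1: "\<bar>j - k\<bar> \<le> 1" by simp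
  have "real_of_int \<bar>j + k\<bar> \<le> 4" using jk2 by simp
  hence a2: "\<bar>j + k\<bar> \<le> 4" by simp

  have jk: "j \<in> {-2..2}" "k \<in> {-2..2}" using a1 a2 unfolding abs_le_iff atLeastAtMost_iff by presburger+
  have "g = transl j ** g' ** transl k" using gh hpos by (simp add: matrix_mul_assoc)
  thus ?thesis using jk by blast
qed

end



context FG begin

lemma main_bound:
  assumes n: "1 \<le> n"
  shows "finite (excursion_lifts \<Gamma> n T) \<and> real (A_count \<Gamma> n T) \<le> 400 * exp T / (real n)^2"
proof -
  define S where "S = excursion_lifts \<Gamma> n T"
  have fin: "finite S" unfolding S_def using S_finite[OF n] .
  show ?thesis
  proof (cases "S = {}")
    case True
    thus ?thesis using fin unfolding A_count_def S_def by simp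
  next
    case False
    then obtain g1 where g1: "g1 \<in> S" by blast
    note P1 = S_props[OF g1[unfolded S_def] n]
    have nE: "real n \<le> 2 * exp (T/2)"
    proof -
      have "real n \<le> real n * \<bar>g1$2$1\<bar>" using P1(3) by (simp add: mult_le_cancel_left1)
      thus ?thesis using P1(6) P1(5) by linarith
    qed
    have eT: "(exp (T/2))^2 = exp T" by (simp add: power2_eq_square exp_add[symmetric])
    have n2: "(real n)^2 \<le> 4 * exp T"
    proof -
      have "(real n)^2 \<le> (2 * exp (T/2))^2" using nE by (intro power_mono) auto
      thus ?thesis using eT by (simp add: power_mult_distrib)
    qed
    define \<delta> where "\<delta> = (real n)^2 / (4 * exp T)"
    have d0: "0 < \<delta>" unfolding \<delta>_def using n by simp
    have d1: "\<delta> \<le> 1" unfolding \<delta>_def using n2 by simp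
    define key where "key g = (sgn (g$2$1), phi g)" for g
    define Fb where "Fb y = {g\<in>S. key g = y}" for y
    have Sun: "S = (\<Union>y\<in>key ` S. Fb y)" unfolding Fb_def by auto
    have fibc: "card (Fb y) \<le> 25" if y: "y \<in> key ` S" for y
    proof -
      obtain g0 where g0: "g0 \<in> S" "key g0 = y" using y by blast
      have "Fb y \<subseteq> (\<lambda>(j,k). transl j ** g0 ** transl k) ` ({-2..2} \<times> {-2..2})"
      proof
        fix g assume "g \<in> Fb y"
        hence g: "g \<in> S" "key g = key g0" using g0 unfolding Fb_def by auto
        hence "phi g = phi g0" "sgn (g$2$1) = sgn (g0$2$1)" unfolding key_def by auto
        then obtain j k where "j \<in> {-2..2}" "k \<in> {-2..2}" "g = transl j ** g0 ** transl k"
          using fiber[OF g(1)[unfolded S_def] g0(1)[unfolded S_def] n] by blast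
        thus "g \<in> (\<lambda>(j,k). transl j ** g0 ** transl k) ` ({-2..2} \<times> {-2..2})" by force
      qed
      hence "card (Fb y) \<le> card ((\<lambda>(j,k). transl j ** g0 ** transl k) ` ({-2..2::int} \<times> {-2..2::int}))"
        by (intro card_mono) auto
      also have "\<dots> \<le> card ({-2..2::int} \<times> {-2..2::int})" by (rule card_image_le) simp
      also have "\<dots> = 25" by (simp add: card_cartesian_product)
      finally show ?thesis .
    qed
    have "card S \<le> (\<Sum>y\<in>key ` S. card (Fb y))"
      by (subst Sun) (rule card_UN_le, use fin in simp)
    also have "\<dots> \<le> (\<Sum>y\<in>key ` S. 25)" by (rule sum_mono) (rule fibc)
    also have "\<dots> = 25 * card (key ` S)" by simp
    finally have c1: "card S \<le> 25 * card (key ` S)" .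
    have ks: "key ` S \<subseteq> {-1, 1} \<times> (phi ` S)"
    proof
      fix y assume "y \<in> key ` S"
      then obtain g where g: "g \<in> S" "y = key g" by blast
      have "g$2$1 \<noteq> 0" using S_props(2)[OF g(1)[unfolded S_def] n] .
      hence "sgn (g$2$1) \<in> {-1, 1}" by (simp add: sgn_if)
      thus "y \<in> {-1, 1} \<times> (phi ` S)" using g unfolding key_def by auto
    qed
    have "card (key ` S) \<le> card ({-1, 1::real} \<times> (phi ` S))"
      by (rule card_mono[OF _ ks]) (use fin in simp)
    also have "\<dots> = 2 * card (phi ` S)" by (simp add: card_cartesian_product)
    finally have c2: "card (key ` S) \<le> 2 * card (phi ` S)" .
    have psub: "phi ` S \<subseteq> {0..<1}"
    proof
      fix x assume "x \<in> phi ` S"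
      then obtain g where "x = phi g" by blast
      hence "x = frac (g$1$1 / g$2$1)" unfolding phi_def frac_def by simp
      thus "x \<in> {0..<1}" using frac_ge_0 frac_lt_1 by simp
    qed
    have psep: "\<delta> \<le> \<bar>p - q\<bar>" if pq: "p \<in> phi ` S" "q \<in> phi ` S" "p \<noteq> q" for p q
    proof -
      obtain g g' where "g \<in> S" "g' \<in> S" "p = phi g" "q = phi g'" using pq(1,2) by blast
      thus ?thesis using phi_sep[of g n T g'] n pq(3) unfolding S_def \<delta>_def by simp
    qed
    have c3: "real (card (phi ` S)) \<le> 2 / \<delta>"
      by (rule spacing_card[OF _ psub d0 d1 psep]) (use fin in simp)
    have "real (card S) \<le> 25 * (2 * (2 / \<delta>))"
    proof -
      have "real (card S) \<le> 25 * real (card (key ` S))" using c1 by linarith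
      also have "\<dots> \<le> 25 * (2 * real (card (phi ` S)))" using c2 by simp
      also have "\<dots> \<le> 25 * (2 * (2 / \<delta>))" using c3 by simp
      finally show ?thesis .
    qed
    also have "\<dots> = 400 * exp T / (real n)^2" unfolding \<delta>_def using n by (simp add: field_simps)
    finally show ?thesis using fin unfolding A_count_def S_def by simp
  qed
qed

end

theorem proposition4p5:
  fixes \<Gamma> :: "mat2 set"
  assumes "fuchsian_finite_area_surface_group \<Gamma>"
    and "cusp_at_infinity \<Gamma>"
  shows "\<exists>C>0. \<forall>n::nat. \<forall>T::real. n \<ge> 1 \<longrightarrow> T > 0 \<longrightarrow>
           finite (excursion_lifts \<Gamma> n T) \<and>
           real (A_count \<Gamma> n T) \<le> C * exp T / (real n)^2"
proof -
  interpret FG \<Gamma> using assms by unfold_locales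
  show ?thesis by (rule exI[of _ 400]) (simp add: main_bound)
qed



end
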